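(* Let $k$ be a number field, $r$ a nonzero integer, $R$ the localization of the ring of integers of $k$ at the powers of $r$, $K$ a field with an $R$-algebra structure, and $B(\mathbf y)=\sum_{\kappa=1}^3B^{(\kappa)}y_\kappa$ a symmetric $3\times3$ matrix of linear forms with coefficients in $R$. Assume that the projective plane curves $\det B(\mathbf y)=0$ and $\det B^\bullet(\mathbf x)=0$ are elliptic curves. Then the $3$-dimensional abelian subalgebras of $\mathfrak g_B(K)$ that are contained in $V=U\oplus W$ are exactly the subspaces $\psi(M)(U)$ for $M\in\mathrm{GL}_2(K)$.
   Context: Let $U=W=T=K^3$ with bases $e_1,e_2,e_3$, $f_1,f_2,f_3$, $g_1,g_2,g_3$; let $\phi:U\times W\to T$, $\phi(u,w)=\sum_\kappa (uB^{(\kappa)}w^{\mathrm T})g_\kappa$ (coordinates as row vectors). $\mathfrak g_B(K)$ is $U\oplus W\oplus T$ with bracket $[(u,w,t),(u',w',t')]=\phi(u,w')-\phi(u',w)\in T$. The bar map $U\to W$, $\sum u_je_j\mapsto\sum u_jf_j$, and its inverse $W\to U$ are both written $x\mapsto\bar x$. For $M=\begin{pmatrix}a&b\\c&d\end{pmatrix}\in\mathrm{GL}_2(K)$, $\psi(M)$ is the automorphism $(u,w,t)\mapsto(au+b\bar w,\,c\bar u+dw,\,(ad-bc)t)$ of $\mathfrak g_B(K)$. The dual matrix is $B^\bullet(\mathbf x)=\big(\sum_{j=1}^3B^{(\kappa)}_{ij}x_j\big)_{i\kappa}$. *)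

theory Defs
  imports "HOL-Analysis.Analysis" "HOL-Algebra.Algebraic_Closure_Type"
begin

definition number_field :: "complex set \<Rightarrow> bool" where
  "number_field k \<longleftrightarrow>
     0 \<in> k \<and> 1 \<in> k \<and>
     (\<forall>x\<in>k. \<forall>y\<in>k. x + y \<in> k \<and> x - y \<in> k \<and> x * y \<in> k) \<and>
     (\<forall>x\<in>k. x \<noteq> 0 \<longrightarrow> inverse x \<in> k) \<and>
     (\<exists>S. finite S \<and> S \<subseteq> k \<and>
        (\<forall>x\<in>k. \<exists>q. (\<forall>s\<in>S. q s \<in> \<rat>) \<and> x = (\<Sum>s\<in>S. q s * s)))"

definition ring_of_integers :: "complex set \<Rightarrow> complex set" where
  "ring_of_integers k =
     {x \<in> k. \<exists>p :: int poly. Polynomial.lead_coeff p = 1 \<and> Polynomial.poly (map_poly of_int p) x = 0}"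

definition loc_ring :: "complex set \<Rightarrow> int \<Rightarrow> complex set" where
  "loc_ring k r = {x. \<exists>a\<in>ring_of_integers k. \<exists>n::nat. x = a / (of_int r) ^ n}"

text \<open>A ring homomorphism from the subring R to a field (the R-algebra structure).\<close>

definition ring_hom_on :: "complex set \<Rightarrow> (complex \<Rightarrow> 'K::field) \<Rightarrow> bool" where
  "ring_hom_on R f \<longleftrightarrow> f 1 = 1 \<and>
     (\<forall>x\<in>R. \<forall>y\<in>R. f (x + y) = f x + f y \<and> f (x * y) = f x * f y)"

text \<open>A 3x3 matrix of linear forms in three variables, given by its coefficient
matrices: A \<kappa> i j is the (i,j) entry of the coefficient matrix of y_\<kappa>.\<close>

definition lin_matrix :: "(3 \<Rightarrow> 3 \<Rightarrow> 3 \<Rightarrow> 'a::comm_ring_1) \<Rightarrow> 'a^3 \<Rightarrow> 'a^3^3" where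
  "lin_matrix A y = (\<chi> i j. \<Sum>\<kappa>\<in>UNIV. A \<kappa> i j * y $ \<kappa>)"

definition det_form :: "(3 \<Rightarrow> 3 \<Rightarrow> 3 \<Rightarrow> 'a::comm_ring_1) \<Rightarrow> 'a^3 \<Rightarrow> 'a" where
  "det_form A y = det (lin_matrix A y)"

text \<open>The formal partial derivative of det A(y) with respect to y_m
(multilinearity of det in the rows: replace one row by its derivative).\<close>

definition det_form_deriv :: "(3 \<Rightarrow> 3 \<Rightarrow> 3 \<Rightarrow> 'a::comm_ring_1) \<Rightarrow> 3 \<Rightarrow> 'a^3 \<Rightarrow> 'a" where
  "det_form_deriv A m y =
     (\<Sum>i\<in>UNIV. det (\<chi> i' j. if i' = i then A m i j else lin_matrix A y $ i' $ j))"

definition singular_point :: "(3 \<Rightarrow> 3 \<Rightarrow> 3 \<Rightarrow> 'a::comm_ring_1) \<Rightarrow> 'a^3 \<Rightarrow> bool" where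
  "singular_point A z \<longleftrightarrow> z \<noteq> 0 \<and> det_form A z = 0 \<and> (\<forall>m. det_form_deriv A m z = 0)"

text \<open>The dual matrix: Bdual(x)_(i,kappa) = sum_j B^(kappa)_(i,j) x_j, written again as a
matrix of linear forms in x (coefficient of x_j at entry (i,\<kappa>) is B^(kappa)_(i,j)).\<close>

definition dual_coeffs :: "(3 \<Rightarrow> 3 \<Rightarrow> 3 \<Rightarrow> 'a) \<Rightarrow> 3 \<Rightarrow> 3 \<Rightarrow> 3 \<Rightarrow> 'a" where
  "dual_coeffs B = (\<lambda>j i \<kappa>. B \<kappa> i j)"

text \<open>The plane cubic det A = 0 with coefficients in a number field k \<subseteq> \<complex> is an
elliptic curve over k: it is smooth (over the algebraically closed field \<complex>)
and has a k-rational point.\<close>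

definition elliptic_over :: "complex set \<Rightarrow> (3 \<Rightarrow> 3 \<Rightarrow> 3 \<Rightarrow> complex) \<Rightarrow> bool" where
  "elliptic_over k A \<longleftrightarrow>
     (\<forall>z::complex^3. \<not> singular_point A z) \<and>
     (\<exists>y::complex^3. y \<noteq> 0 \<and> (\<forall>\<kappa>. y $ \<kappa> \<in> k) \<and> det_form A y = 0)"

definition geom_smooth :: "(3 \<Rightarrow> 3 \<Rightarrow> 3 \<Rightarrow> 'F::field) \<Rightarrow> bool" where
  "geom_smooth A \<longleftrightarrow>
     (\<forall>z::'F alg_closure^3. \<not> singular_point (\<lambda>\<kappa> i j. to_ac (A \<kappa> i j)) z)"

text \<open>The Lie algebra g_B(K) = U \<oplus> W \<oplus> T with U = W = T = K^3, elements written
as triples (u,w,t).  The bar maps are the identity on coordinates.\<close>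

type_synonym 'K gelem = "('K^3) \<times> ('K^3) \<times> ('K^3)"

definition gscale :: "'K::field \<Rightarrow> 'K gelem \<Rightarrow> 'K gelem" where
  "gscale c x = (case x of (u, w, t) \<Rightarrow> (c *s u, c *s w, c *s t))"

definition phiB :: "(3 \<Rightarrow> 3 \<Rightarrow> 3 \<Rightarrow> 'K::field) \<Rightarrow> 'K^3 \<Rightarrow> 'K^3 \<Rightarrow> 'K^3" where
  "phiB BK u w = (\<chi> \<kappa>. \<Sum>i\<in>UNIV. \<Sum>j\<in>UNIV. u $ i * BK \<kappa> i j * w $ j)"

definition gbracket :: "(3 \<Rightarrow> 3 \<Rightarrow> 3 \<Rightarrow> 'K::field) \<Rightarrow> 'K gelem \<Rightarrow> 'K gelem \<Rightarrow> 'K gelem" where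
  "gbracket BK x y = (case x of (u, w, t) \<Rightarrow> case y of (u', w', t') \<Rightarrow>
      (0, 0, phiB BK u w' - phiB BK u' w))"

definition Vsub :: "'K::field gelem set" where
  "Vsub = {(u, w, 0) | u w. True}"

definition Usub :: "'K::field gelem set" where
  "Usub = {(u, 0, 0) | u. True}"

definition abelian_subalgebra :: "(3 \<Rightarrow> 3 \<Rightarrow> 3 \<Rightarrow> 'K::field) \<Rightarrow> 'K gelem set \<Rightarrow> bool" where
  "abelian_subalgebra BK S \<longleftrightarrow>
     module.subspace gscale S \<and> (\<forall>x\<in>S. \<forall>y\<in>S. gbracket BK x y = (0, 0, 0))"

definition gdim :: "'K::field gelem set \<Rightarrow> nat" where
  "gdim S = vector_space.dim gscale S"

text \<open>psi(M) for M = (a b; c d).\<close>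

definition psi :: "'K::field \<times> 'K \<times> 'K \<times> 'K \<Rightarrow> 'K gelem \<Rightarrow> 'K gelem" where
  "psi M x = (case M of (a, b, c, d) \<Rightarrow> case x of (u, w, t) \<Rightarrow>
      (a *s u + b *s w, c *s u + d *s w, (a * d - b * c) *s t))"

end

theory Submission
  imports Defs
begin

definition cr :: "'a::comm_ring_1^3 \<Rightarrow> 'a^3 \<Rightarrow> 'a^3" where
  "cr a b = vector [a$2*b$3 - a$3*b$2, a$3*b$1 - a$1*b$3, a$1*b$2 - a$2*b$1]"

definition dt :: "'a::comm_ring_1^3 \<Rightarrow> 'a^3 \<Rightarrow> 'a" where
  "dt a b = (\<Sum>i\<in>UNIV. a$i * b$i)"

lemma dt3: "dt a b = a$1*b$1 + a$2*b$2 + a$3*b$3"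
  by (simp add: dt_def sum_3)

lemma vec3_eq: "(x::'a^3) = y \<longleftrightarrow> x$1 = y$1 \<and> x$2 = y$2 \<and> x$3 = y$3"
  by (simp add: vec_eq_iff forall_3)

lemma cr_comp: "cr a b $ 1 = a$2*b$3 - a$3*b$2" "cr a b $ 2 = a$3*b$1 - a$1*b$3"
  "cr a b $ 3 = a$1*b$2 - a$2*b$1"
  by (simp_all add: cr_def)

lemma cr_zero_iff: "cr a b = 0 \<longleftrightarrow> a$2*b$3 = a$3*b$2 \<and> a$3*b$1 = a$1*b$3 \<and> a$1*b$2 = a$2*b$1"
  by (simp add: vec3_eq cr_comp)

lemma parallel:
  fixes c n :: "'a::field^3"
  assumes "cr c n = 0" "n \<noteq> 0"
  shows "\<exists>t. c = t *s n"
proof -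
  have h: "c$2*n$3 = c$3*n$2" "c$3*n$1 = c$1*n$3" "c$1*n$2 = c$2*n$1"
    using assms(1) by (auto simp: cr_zero_iff)
  have "n$1 \<noteq> 0 \<or> n$2 \<noteq> 0 \<or> n$3 \<noteq> 0" using assms(2) by (auto simp: vec3_eq)
  then show ?thesis
  proof (elim disjE)
    assume "n$1 \<noteq> 0"
    then show ?thesis using h
      by (intro exI[of _ "c$1/n$1"]) (auto simp: vec3_eq field_simps)
  next
    assume "n$2 \<noteq> 0"
    then show ?thesis using h
      by (intro exI[of _ "c$2/n$2"]) (auto simp: vec3_eq field_simps)
  next
    assume "n$3 \<noteq> 0"
    then show ?thesis using h
      by (intro exI[of _ "c$3/n$3"]) (auto simp: vec3_eq field_simps)
  qed
qed

lemma bac_cab: "cr c (cr a b) = dt c b *s a - dt c a *s b"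
  unfolding vec3_eq cr_comp dt3 by (simp add: right_diff_distrib left_diff_distrib distrib_left distrib_right)

lemma dt_comm: "dt a b = dt b a"
  by (simp add: dt_def mult.commute)

lemma lemG:
  fixes a b c d :: "'a::field^3"
  assumes "dt a c = 0" "dt b c = 0" "dt a d = 0" "dt b d = 0" "cr a b \<noteq> 0"
  shows "cr c d = 0"
proof -
  have "cr c (cr a b) = 0" using assms(1,2)
    by (simp add: bac_cab dt_comm)
  moreover have "cr d (cr a b) = 0" using assms(3,4)
    by (simp add: bac_cab dt_comm)
  ultimately obtain t s where "c = t *s cr a b" "d = s *s cr a b"
    using parallel assms(5) by metis
  then show ?thesis by (simp add: vec3_eq cr_comp) algebra
qed

lemma cr_zero_cases:
  fixes a b :: "'a::field^3"
  assumes "cr a b = 0"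
  shows "a = 0 \<or> (\<exists>t. b = t *s a)"
proof -
  have "cr b a = 0" using assms unfolding cr_zero_iff by (metis mult.commute)
  then show ?thesis using parallel[of b a] by blast
qed

lemma perp_pair:
  fixes p :: "'a::field^3"
  assumes "p \<noteq> 0"
  shows "\<exists>z1 z2. dt z1 p = 0 \<and> dt z2 p = 0 \<and> cr z1 z2 \<noteq> 0"
proof -
  have "p$1 \<noteq> 0 \<or> p$2 \<noteq> 0 \<or> p$3 \<noteq> 0" using assms by (auto simp: vec3_eq)
  then show ?thesis
  proof (elim disjE)
    assume h: "p$1 \<noteq> 0"
    show ?thesis
      by (rule exI[of _ "vector [p$2, - p$1, 0]"], rule exI[of _ "vector [p$3, 0, - p$1]"])
        (simp add: dt3 cr_def vec3_eq h algebra_simps)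
  next
    assume h: "p$2 \<noteq> 0"
    show ?thesis
      by (rule exI[of _ "vector [- p$2, p$1, 0]"], rule exI[of _ "vector [0, p$3, - p$2]"])
        (simp add: dt3 cr_def vec3_eq h algebra_simps)
  next
    assume h: "p$3 \<noteq> 0"
    show ?thesis
      by (rule exI[of _ "vector [- p$3, 0, p$1]"], rule exI[of _ "vector [0, - p$3, p$2]"])
        (simp add: dt3 cr_def vec3_eq h algebra_simps)
  qed
qed

definition rowrep :: "'a^3^3 \<Rightarrow> 3 \<Rightarrow> 'a^3 \<Rightarrow> 'a^3^3" where
  "rowrep M i v = (\<chi> i' j. if i' = i then v$j else M$i'$j)"

lemma det_rowrep:
  fixes M :: "'a::comm_ring_1^3^3"
  shows "det (rowrep M i v) = v$1 * cr (column 2 M) (column 3 M) $ i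
     + v$2 * cr (column 3 M) (column 1 M) $ i + v$3 * cr (column 1 M) (column 2 M) $ i"
proof -
  have "i = 1 \<or> i = 2 \<or> i = 3" using exhaust_3 by blast
  then show ?thesis
    by (elim disjE) (simp_all add: det_3 rowrep_def cr_comp column_def algebra_simps)
qed

lemma det_as_rowrep: "det (M::'a::comm_ring_1^3^3) = det (rowrep M 1 (M$1))"
  by (rule arg_cong[where f=det]) (simp add: rowrep_def vec_eq_iff)

definition col :: "(3 \<Rightarrow> 3 \<Rightarrow> 3 \<Rightarrow> 'a::comm_ring_1) \<Rightarrow> 'a^3 \<Rightarrow> 3 \<Rightarrow> 'a^3" where
  "col BK w k = (\<chi> a. \<Sum>b\<in>UNIV. BK k a b * w$b)"

lemma column_lin_dual: "column k (lin_matrix (dual_coeffs BK) w) = col BK w k"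
  by (simp add: column_def lin_matrix_def dual_coeffs_def col_def vec_eq_iff)

lemma sing_from_rank1:
  fixes BK :: "3 \<Rightarrow> 3 \<Rightarrow> 3 \<Rightarrow> 'a::comm_ring_1"
  assumes "w \<noteq> 0" "\<forall>k l. cr (col BK w k) (col BK w l) = 0"
  shows "singular_point (dual_coeffs BK) w"
proof -
  let ?M = "lin_matrix (dual_coeffs BK) w"
  have z: "cr (column k ?M) (column l ?M) = 0" for k l
    using assms(2) by (simp add: column_lin_dual)
  have d: "det (rowrep ?M i v) = 0" for i v
    unfolding det_rowrep z by simp
  have "det_form (dual_coeffs BK) w = 0"
    unfolding det_form_def by (subst det_as_rowrep) (rule d)
  moreover have "det_form_deriv (dual_coeffs BK) m w = 0" for m
  proof -
    have "det_form_deriv (dual_coeffs BK) m w =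
       (\<Sum>i\<in>UNIV. det (rowrep ?M i (\<chi> j. dual_coeffs BK m i j)))"
      unfolding det_form_deriv_def rowrep_def
      by (intro sum.cong refl arg_cong[where f=det]) (simp add: vec_eq_iff)
    also have "\<dots> = 0" by (simp add: d)
    finally show ?thesis .
  qed
  ultimately show ?thesis using assms(1) by (simp add: singular_point_def)
qed

definition NS :: "(3 \<Rightarrow> 3 \<Rightarrow> 3 \<Rightarrow> 'a::comm_ring_1) \<Rightarrow> bool" where
  "NS BK \<longleftrightarrow> (\<forall>w. w \<noteq> 0 \<longrightarrow> \<not> (\<forall>k l. cr (col BK w k) (col BK w l) = 0))"

lemma phiB_dt: "phiB BK u w $ k = dt u (col BK w k)"
  by (simp add: phiB_def dt_def col_def sum_distrib_left mult.assoc)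

lemma dt_col_sym:
  assumes "\<forall>k i j. BK k i j = BK k j i"
  shows "dt u (col BK w k) = dt w (col BK u k)"
  using assms by (simp add: dt_def col_def sum_3 algebra_simps)

lemma phiB_vm1: fixes Mx :: "'a::field^3^3" shows "phiB BK (z v* Mx) w $ k = (\<Sum>j\<in>UNIV. z$j * phiB BK (Mx$j) w $ k)"
  by (simp add: phiB_def vector_matrix_mult_def sum_3 algebra_simps)

lemma phiB_vm2: fixes My :: "'a::field^3^3" shows "phiB BK u (z v* My) $ k = (\<Sum>j\<in>UNIV. z$j * phiB BK u (My$j) $ k)"
  by (simp add: phiB_def vector_matrix_mult_def sum_3 algebra_simps)

lemma phiB_zero1: "phiB BK 0 w = 0"
  by (simp add: phiB_def vec_eq_iff)

lemma cr_self: "cr a a = 0"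
  by (simp add: cr_def vec3_eq mult.commute)

lemma cr_anti: "cr b a = - cr a b"
  by (simp add: cr_def vec3_eq)

lemma cr_zero_left: "cr 0 a = 0"
  by (simp add: cr_def vec3_eq)

lemma cr_scale_self: "cr a (t *s a) = 0"
  by (simp add: cr_def vec3_eq algebra_simps)

lemma adj_rows:
  fixes Mx :: "'a::comm_ring_1^3^3"
  shows "vector [cr (Mx$2) (Mx$3) $ m, cr (Mx$3) (Mx$1) $ m, cr (Mx$1) (Mx$2) $ m] v* Mx = det Mx *s axis m 1"
proof -
  have "m = 1 \<or> m = 2 \<or> m = 3" using exhaust_3 by blast
  then show ?thesis
    by (elim disjE) (simp_all add: vec3_eq det_3 cr_comp vector_matrix_mult_def sum_3 axis_def algebra_simps)
qed

lemma vm_rank1: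
  fixes Mx :: "'a::comm_ring_1^3^3"
  assumes "\<forall>i. Mx$i = p$i *s q"
  shows "z v* Mx = dt z p *s q"
  using assms by (simp add: vec3_eq vector_matrix_mult_def sum_3 dt3 algebra_simps)

lemma vm_diff: "(z2 - t *s z1) v* (My::'a::comm_ring_1^3^3) = z2 v* My - t *s (z1 v* My)"
  by (simp add: vec3_eq vector_matrix_mult_def sum_3 algebra_simps)

lemma dt_diff: "dt (z2 - t *s z1) p = dt z2 p - t * dt z1 p"
  by (simp add: dt3 algebra_simps)

lemma L1:
  fixes BK :: "3 \<Rightarrow> 3 \<Rightarrow> 3 \<Rightarrow> 'a::field" and Mx My :: "'a^3^3"
  assumes sym: "\<forall>k i j. BK k i j = BK k j i" and ns: "NS BK"
    and inj: "\<forall>z. z v* Mx = 0 \<and> z v* My = 0 \<longrightarrow> z = 0"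
    and ab: "\<forall>i j. phiB BK (Mx$i) (My$j) = phiB BK (Mx$j) (My$i)"
    and dX: "det Mx = 0"
  shows "Mx = 0"
proof (rule ccontr)
  assume Mx0: "Mx \<noteq> 0"
  have ab2: "phiB BK (z v* Mx) (My$i) = phiB BK (Mx$i) (z v* My)" for z i
    using ab by (simp add: vec_eq_iff phiB_vm1 phiB_vm2)
  have nsD: False if "w \<noteq> 0" "\<And>k l. cr (col BK w k) (col BK w l) = 0" for w
    using ns that unfolding NS_def by blast
  show False
  proof (cases "\<exists>i j. cr (Mx$i) (Mx$j) \<noteq> 0")
    case True
    then obtain i j where ij: "cr (Mx$i) (Mx$j) \<noteq> 0" by blast
    define zm where "zm m = (vector [cr (Mx$2) (Mx$3) $ m, cr (Mx$3) (Mx$1) $ m, cr (Mx$1) (Mx$2) $ m] :: 'a^3)" for m :: 3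
    have zmX: "zm m v* Mx = 0" for m
      unfolding zm_def adj_rows dX by simp
    have "\<exists>m. zm m \<noteq> 0"
    proof (rule ccontr)
      assume "\<not> (\<exists>m. zm m \<noteq> 0)"
      then have "\<forall>m. zm m = 0" by blast
      then have c: "cr (Mx$2) (Mx$3) = 0" "cr (Mx$3) (Mx$1) = 0" "cr (Mx$1) (Mx$2) = 0"
        unfolding zm_def by (simp_all add: vec3_eq)
      have "i = 1 \<or> i = 2 \<or> i = 3" "j = 1 \<or> j = 2 \<or> j = 3" using exhaust_3 by blast+
      then have "cr (Mx$i) (Mx$j) = 0"
      proof -
        have c': "cr (Mx$3) (Mx$2) = 0" "cr (Mx$1) (Mx$3) = 0" "cr (Mx$2) (Mx$1) = 0"
          using c cr_anti by (metis neg_equal_0_iff_equal)+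
        show ?thesis using c c' \<open>i = 1 \<or> i = 2 \<or> i = 3\<close> \<open>j = 1 \<or> j = 2 \<or> j = 3\<close> cr_self
          by fastforce
      qed
      then show False using ij by blast
    qed
    then obtain m where m: "zm m \<noteq> 0" by blast
    define w where "w = zm m v* My"
    have w0: "w \<noteq> 0" using inj zmX m unfolding w_def by blast
    have dts: "dt (Mx$i') (col BK w k) = 0" for i' k
    proof -
      have "phiB BK (Mx$i') w = 0"
        using ab2[of "zm m" i'] unfolding w_def zmX phiB_zero1 by simp
      then show ?thesis by (metis phiB_dt zero_index)
    qed
    have "cr (col BK w k) (col BK w l) = 0" for k l
      by (rule lemG[OF dts dts dts dts ij])
    then show False using nsD w0 by blast
  next
    case False
    then have allc: "\<forall>i j. cr (Mx$i) (Mx$j) = 0" by blast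
    obtain k where qk: "Mx$k \<noteq> 0" using Mx0 by (metis vec_eq_iff zero_index)
    define q where "q = Mx$k"
    have "\<forall>i. \<exists>t. Mx$i = t *s q"
      using allc parallel qk unfolding q_def by blast
    then obtain pf where pf: "\<forall>i. Mx$i = pf i *s q" by metis
    define p where "p = (\<chi> i. pf i)"
    have pX: "\<forall>i. Mx$i = p$i *s q" using pf unfolding p_def by simp
    have "p \<noteq> 0"
    proof
      assume "p = 0"
      then have "Mx$k = 0" using pX by simp
      then show False using qk by blast
    qed
    then obtain z1 z2 where z: "dt z1 p = 0" "dt z2 p = 0" "cr z1 z2 \<noteq> 0"
      using perp_pair by blast
    have zX: "z v* Mx = 0" if "dt z p = 0" for z
      using vm_rank1[OF pX] that by simp
    define a where "a = z1 v* My"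
    define b where "b = z2 v* My"
    have "cr a b \<noteq> 0"
    proof
      assume "cr a b = 0"
      then have "a = 0 \<or> (\<exists>t. b = t *s a)" by (rule cr_zero_cases)
      then show False
      proof
        assume "a = 0"
        then have "z1 = 0" using inj zX[OF z(1)] unfolding a_def by blast
        then show False using z(3) cr_zero_left by metis
      next
        assume "\<exists>t. b = t *s a"
        then obtain t where t: "b = t *s a" by blast
        have "dt (z2 - t *s z1) p = 0" using z by (simp add: dt_diff)
        moreover have "(z2 - t *s z1) v* My = 0"
          using t unfolding a_def b_def vm_diff by simp
        ultimately have "z2 - t *s z1 = 0" using inj zX by blast
        then have "z2 = t *s z1" by simp
        then show False using z(3) cr_scale_self by metis
      qed
    qed
    have pq: "phiB BK q (zz v* My) = 0" if "dt zz p = 0" for zz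
      using ab2[of zz k] unfolding q_def zX[OF that] phiB_zero1 by simp
    have da: "dt a (col BK q kk) = 0" for kk
      using pq[OF z(1)] dt_col_sym[OF sym, of q "a" kk] unfolding a_def
      by (metis phiB_dt zero_index)
    have db: "dt b (col BK q kk) = 0" for kk
      using pq[OF z(2)] dt_col_sym[OF sym, of q "b" kk] unfolding b_def
      by (metis phiB_dt zero_index)
    have "cr (col BK q kk) (col BK q l) = 0" for kk l
      by (rule lemG[OF da db da db \<open>cr a b \<noteq> 0\<close>])
    then show False using nsD qk unfolding q_def by blast
  qed
qed

lemma exists_root:
  fixes Mx My :: "'a::alg_closed_field^3^3"
  assumes "det Mx \<noteq> 0"
  shows "\<exists>l. det (\<chi> i. My$i - l *s Mx$i) = 0"
proof -
  define c0 where "c0 = det My"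
  define c1 where "c1 = - (\<Sum>i\<in>UNIV. det (rowrep My i (Mx$i)))"
  define c2 where "c2 = (\<Sum>i\<in>UNIV. det (rowrep Mx i (My$i)))"
  define c3 where "c3 = - det Mx"
  define f where "f k = (if k = 0 then c0 else if k = 1 then c1 else if k = 2 then c2 else c3)" for k :: nat
  have "f 3 \<noteq> 0" using assms by (simp add: f_def c3_def)
  then obtain l where "(\<Sum>k\<le>3. f k * l ^ k) = 0"
    using alg_closed[of 3 f] by auto
  moreover have "(\<Sum>k\<le>3. f k * l ^ k) = c0 + c1 * l + c2 * l^2 + c3 * l^3"
    by (simp add: f_def eval_nat_numeral)
  moreover have "det (\<chi> i. My$i - l *s Mx$i) = c0 + c1 * l + c2 * l^2 + c3 * l^3"
    unfolding c0_def c1_def c2_def c3_def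
    by (simp add: det_3 rowrep_def sum_3 power2_eq_square power3_eq_cube algebra_simps)
  ultimately show ?thesis by metis
qed

definition mapv :: "('a \<Rightarrow> 'b) \<Rightarrow> 'a^3 \<Rightarrow> 'b^3" where
  "mapv g v = (\<chi> i. g (v$i))"

lemma mapv_nth [simp]: "mapv g v $ i = g (v$i)"
  by (simp add: mapv_def)

lemma mapv_ac_eq0: "mapv to_ac v = 0 \<longleftrightarrow> v = 0"
  by (simp add: vec_eq_iff)

lemma col_ac: "col (\<lambda>k i j. to_ac (BK k i j)) (mapv to_ac w) k = mapv to_ac (col BK w k)"
  by (simp add: col_def vec_eq_iff to_ac_sum)

lemma cr_ac: "cr (mapv to_ac a) (mapv to_ac b) = mapv to_ac (cr a b)"
  by (simp add: vec3_eq cr_comp)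

lemma phiB_ac: "phiB (\<lambda>k i j. to_ac (BK k i j)) (mapv to_ac u) (mapv to_ac w) = mapv to_ac (phiB BK u w)"
  by (simp add: phiB_def vec_eq_iff to_ac_sum)

lemma NS_from_ac:
  fixes BK :: "3 \<Rightarrow> 3 \<Rightarrow> 3 \<Rightarrow> 'a::field"
  assumes "NS (\<lambda>k i j. to_ac (BK k i j))"
  shows "NS BK"
  unfolding NS_def
proof (intro allI impI notI)
  fix w :: "'a^3" assume w: "w \<noteq> 0" "\<forall>k l. cr (col BK w k) (col BK w l) = 0"
  have "mapv to_ac w \<noteq> 0" using w(1) mapv_ac_eq0 by blast
  moreover have "\<forall>k l. cr (col (\<lambda>k i j. to_ac (BK k i j)) (mapv to_ac w) k)
      (col (\<lambda>k i j. to_ac (BK k i j)) (mapv to_ac w) l) = 0"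
    using w(2) by (simp add: col_ac cr_ac mapv_ac_eq0)
  ultimately show False using assms unfolding NS_def by blast
qed

lemma NS_from_smooth:
  fixes BK :: "3 \<Rightarrow> 3 \<Rightarrow> 3 \<Rightarrow> 'a::field"
  assumes "geom_smooth (dual_coeffs BK)"
  shows "NS (\<lambda>k i j. to_ac (BK k i j))"
  unfolding NS_def
proof (intro allI impI notI)
  fix w assume w: "w \<noteq> 0" "\<forall>k l. cr (col (\<lambda>k i j. to_ac (BK k i j)) w k) (col (\<lambda>k i j. to_ac (BK k i j)) w l) = 0"
  have "singular_point (dual_coeffs (\<lambda>k i j. to_ac (BK k i j))) w"
    by (rule sing_from_rank1[OF w])
  moreover have "dual_coeffs (\<lambda>k i j. to_ac (BK k i j)) = (\<lambda>k i j. to_ac (dual_coeffs BK k i j))"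
    by (simp add: dual_coeffs_def)
  ultimately show False using assms unfolding geom_smooth_def by simp
qed

lemma vs_gscale: "vector_space (gscale :: 'a::field \<Rightarrow> 'a gelem \<Rightarrow> 'a gelem)"
  by unfold_locales (auto simp: gscale_def case_prod_beta prod_eq_iff vec_eq_iff algebra_simps)

lemma inv_ex:
  fixes A :: "'a::field^3^3"
  assumes "det A \<noteq> 0"
  obtains A' where "A ** A' = mat 1" "A' ** A = mat 1"
  using assms invertible_det_nz[of A] unfolding invertible_def by blast

lemma vm_inj:
  fixes A :: "'a::field^3^3"
  assumes "det A \<noteq> 0" "z v* A = 0"
  shows "z = 0"
proof -
  obtain A' where "A ** A' = mat 1" using inv_ex[OF assms(1)] by blast
  then have "z = (z v* A) v* A'" by (simp add: vector_matrix_mul_assoc)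
  then show ?thesis using assms(2) by simp
qed

lemma vm_surj:
  fixes A :: "'a::field^3^3"
  assumes "det A \<noteq> 0"
  shows "\<exists>z. u = z v* A"
proof -
  obtain A' where "A' ** A = mat 1" using inv_ex[OF assms(1)] by blast
  then have "u = (u v* A') v* A" by (simp add: vector_matrix_mul_assoc)
  then show ?thesis by blast
qed

lemma phiB_sym:
  assumes "\<forall>k i j. BK k i j = BK k j i"
  shows "phiB BK u w = phiB BK w u"
  using assms by (simp add: phiB_def vec_eq_iff sum_3 algebra_simps)

lemma phiB_diff1: "phiB BK (u - l *s v) w = phiB BK u w - l *s phiB BK v w"
  by (simp add: phiB_def vec_eq_iff sum_3 algebra_simps)

lemma phiB_scale: "phiB BK (a *s u) (c *s w) = (a * c) *s phiB BK u w"
  by (simp add: phiB_def vec_eq_iff sum_3 algebra_simps)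

lemma gscale_Pair [simp]: "gscale c (u, w, t) = (c *s u, c *s w, c *s t)"
  by (simp add: gscale_def)

lemma psiU_eq: fixes a :: "'a::field" shows "psi (a,b,c,d) ` Usub = {(a *s u, c *s u, 0) | u. True}"
proof
  show "psi (a,b,c,d) ` Usub \<subseteq> {(a *s u, c *s u, 0) | u. True}"
    by (auto simp: Usub_def psi_def)
  show "{(a *s u, c *s u, 0) | u. True} \<subseteq> psi (a,b,c,d) ` Usub"
  proof
    fix x :: "'a gelem" assume "x \<in> {(a *s u, c *s u, 0) | u. True}"
    then obtain u :: "'a^3" where x: "x = (a *s u, c *s u, 0)" by blast
    have "psi (a,b,c,d) (u,0,0) = x" by (simp add: psi_def x)
    moreover have "(u,0,0) \<in> Usub" by (simp add: Usub_def)
    ultimately show "x \<in> psi (a,b,c,d) ` Usub" by blast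
  qed
qed

lemma vm3: fixes M :: "'a::comm_ring_1^3^3"
  shows "z v* M = z$1 *s M$1 + z$2 *s M$2 + z$3 *s M$3"
  by (simp add: vec3_eq vector_matrix_mult_def sum_3 algebra_simps)

lemma axis_vm: fixes M :: "'a::comm_ring_1^3^3"
  shows "axis i 1 v* M = M $ i"
proof -
  have "i = 1 \<or> i = 2 \<or> i = 3" using exhaust_3 by blast
  then show ?thesis by (elim disjE) (simp_all add: vm3 axis_def)
qed

lemma easy:
  fixes BK :: "3 \<Rightarrow> 3 \<Rightarrow> 3 \<Rightarrow> 'a::field"
  assumes sym: "\<forall>k i j. BK k i j = BK k j i" and ac: "a \<noteq> 0 \<or> c \<noteq> 0"
  shows "abelian_subalgebra BK {(a *s u, c *s u, 0) | u. True} \<and> gdim {(a *s u, c *s u, 0) | u. True} = 3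
     \<and> {(a *s u, c *s u, 0) | u. True} \<subseteq> Vsub"
proof -
  interpret V: vector_space "gscale :: 'a \<Rightarrow> 'a gelem \<Rightarrow> 'a gelem" by (rule vs_gscale)
  define g where "g u = (a *s u, c *s u, (0::'a^3))" for u :: "'a^3"
  have Seq: "{(a *s u, c *s u, 0) | u. True} = range g" by (auto simp: g_def)
  have g_add: "g x + g y = g (x + y)" for x y by (simp add: g_def algebra_simps)
  have g_scale: "gscale t (g x) = g (t *s x)" for t x by (simp add: g_def algebra_simps)
  have g0: "g 0 = 0" by (simp add: g_def zero_prod_def)
  have g_inj: "x = y" if "g x = g y" for x y
  proof -
    have "a *s x = a *s y" "c *s x = c *s y" using that by (auto simp: g_def)
    then show ?thesis using ac by (auto simp: vec_eq_iff)
  qed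
  have sub: "V.subspace (range g)"
    unfolding V.subspace_def
    by (auto simp: g_add g_scale intro: range_eqI[of _ _ 0] g0[symmetric])
  have abel: "\<forall>x\<in>range g. \<forall>y\<in>range g. gbracket BK x y = (0, 0, 0)"
    by (auto simp: g_def gbracket_def phiB_scale phiB_sym[OF sym, of _ "_ :: 'a^3"] mult.commute)
  define e where "e i = (axis i 1 :: 'a^3)" for i
  define Bs where "Bs = {g (e 1), g (e 2), g (e 3)}"
  have e_dist: "e 1 \<noteq> e 2" "e 2 \<noteq> e 3" "e 1 \<noteq> e 3"
    by (auto simp: e_def axis_eq_axis)
  then have gd: "g (e 1) \<noteq> g (e 2)" "g (e 2) \<noteq> g (e 3)" "g (e 1) \<noteq> g (e 3)"
    using g_inj by blast+
  have cardB: "card Bs = 3" unfolding Bs_def using gd by simp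
  have BsS: "Bs \<subseteq> range g" unfolding Bs_def by auto
  have ucomb: "u = u$1 *s e 1 + u$2 *s e 2 + u$3 *s e 3" for u :: "'a^3"
    by (simp add: vec3_eq e_def axis_def)
  have span: "range g \<subseteq> V.span Bs"
  proof
    fix x assume "x \<in> range g"
    then obtain u where x: "x = g u" by blast
    have "x = gscale (u$1) (g (e 1)) + gscale (u$2) (g (e 2)) + gscale (u$3) (g (e 3))"
      unfolding x g_scale g_add by (subst ucomb) simp
    also have "\<dots> \<in> V.span Bs"
      unfolding Bs_def by (intro V.span_add V.span_scale V.span_base) auto
    finally show "x \<in> V.span Bs" .
  qed
  have indep: "V.independent Bs"
  proof
    assume "V.dependent Bs"
    then obtain w where w: "\<exists>v\<in>Bs. w v \<noteq> 0" "(\<Sum>v\<in>Bs. gscale (w v) v) = 0"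
      using V.dependent_finite[of Bs] unfolding Bs_def by auto
    have "(\<Sum>v\<in>Bs. gscale (w v) v) = gscale (w (g (e 1))) (g (e 1)) + gscale (w (g (e 2))) (g (e 2))
        + gscale (w (g (e 3))) (g (e 3))"
      unfolding Bs_def using gd by (simp add: add.assoc)
    also have "\<dots> = g (w (g (e 1)) *s e 1 + w (g (e 2)) *s e 2 + w (g (e 3)) *s e 3)"
      unfolding g_scale g_add by simp
    finally have "g (w (g (e 1)) *s e 1 + w (g (e 2)) *s e 2 + w (g (e 3)) *s e 3) = g 0"
      using w(2) g0 by simp
    then have "w (g (e 1)) *s e 1 + w (g (e 2)) *s e 2 + w (g (e 3)) *s e 3 = 0" by (rule g_inj)
    then have "w (g (e 1)) = 0 \<and> w (g (e 2)) = 0 \<and> w (g (e 3)) = 0"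
      by (simp add: vec3_eq e_def axis_def)
    then show False using w(1) unfolding Bs_def by auto
  qed
  have "V.dim (range g) = 3"
    by (rule V.dim_unique[OF BsS span indep cardB])
  moreover have "range g \<subseteq> Vsub" by (auto simp: Vsub_def g_def)
  ultimately show ?thesis unfolding Seq abelian_subalgebra_def gdim_def using sub abel by blast
qed

lemma hard:
  fixes BK :: "3 \<Rightarrow> 3 \<Rightarrow> 3 \<Rightarrow> 'a::field" and S :: "'a gelem set"
  assumes sym: "\<forall>k i j. BK k i j = BK k j i" and ns: "NS BK"
    and nsa: "NS (\<lambda>k i j. to_ac (BK k i j))"
    and ab: "abelian_subalgebra BK S" and dim: "gdim S = 3" and sub: "S \<subseteq> Vsub"
  shows "\<exists>a c. (a \<noteq> 0 \<or> c \<noteq> 0) \<and> S = {(a *s u, c *s u, 0) | u. True}"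
proof -
  interpret V: vector_space "gscale :: 'a \<Rightarrow> 'a gelem \<Rightarrow> 'a gelem" by (rule vs_gscale)
  have subS: "V.subspace S" and brS: "\<forall>x\<in>S. \<forall>y\<in>S. gbracket BK x y = (0, 0, 0)"
    using ab unfolding abelian_subalgebra_def by auto
  obtain Bs where Bs: "Bs \<subseteq> S" "V.independent Bs" "S \<subseteq> V.span Bs" "card Bs = V.dim S"
    using V.basis_exists by blast
  have "card Bs = 3" using Bs(4) dim unfolding gdim_def by simp
  then obtain s1 s2 s3 where s: "Bs = {s1, s2, s3}" "s1 \<noteq> s2" "s2 \<noteq> s3" "s1 \<noteq> s3"
    unfolding card_3_iff by blast
  have "s1 \<in> Vsub" "s2 \<in> Vsub" "s3 \<in> Vsub" using Bs(1) sub s(1) by auto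
  then obtain u1 w1 u2 w2 u3 w3 where uw: "s1 = (u1, w1, 0)" "s2 = (u2, w2, 0)" "s3 = (u3, w3, 0)"
    unfolding Vsub_def by blast
  define Mx where "Mx = (vector [u1, u2, u3] :: 'a^3^3)"
  define My where "My = (vector [w1, w2, w3] :: 'a^3^3)"
  define el where "el z = (z v* Mx, z v* My, (0::'a^3))" for z :: "'a^3"
  have el_sum: "el z = gscale (z$1) s1 + gscale (z$2) s2 + gscale (z$3) s3" for z
    unfolding el_def uw by (simp add: vm3 Mx_def My_def)
  have el_S: "el z \<in> S" for z
    unfolding el_sum using Bs(1) s(1)
    by (intro V.subspace_add[OF subS] V.subspace_scale[OF subS]) auto
  have el_add: "el z + el z' = el (z + z')" for z z'
    by (simp add: el_def vm3 algebra_simps)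
  have el_scale: "gscale t (el z) = el (t *s z)" for t z
    by (simp add: el_def vm3 algebra_simps)
  have el0: "el 0 = 0" by (simp add: el_def zero_prod_def)
  have sub_el: "V.subspace (range el)"
    unfolding V.subspace_def
    by (auto simp: el_add el_scale intro: range_eqI[of _ _ 0] el0[symmetric])
  have el_axis: "el (axis i 1) = (Mx$i, My$i, 0)" for i
    by (simp add: el_def axis_vm)
  have "s1 = el (axis 1 1)" "s2 = el (axis 2 1)" "s3 = el (axis 3 1)"
    unfolding el_axis by (simp_all add: Mx_def My_def uw)
  then have "Bs \<subseteq> range el" using s(1) by auto
  then have "V.span Bs \<subseteq> range el" using V.span_minimal sub_el by blast
  then have Seq: "S = range el" using Bs(3) el_S by blast
  have inj: "\<forall>z. z v* Mx = 0 \<and> z v* My = 0 \<longrightarrow> z = 0"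
  proof (intro allI impI)
    fix z :: "'a^3" assume "z v* Mx = 0 \<and> z v* My = 0"
    then have e0: "el z = 0" by (simp add: el_def zero_prod_def)
    define w where "w v = (if v = s1 then z$1 else if v = s2 then z$2 else z$3)" for v
    have "(\<Sum>v\<in>Bs. gscale (w v) v) = el z"
      unfolding el_sum s(1) using s(2-4) by (simp add: w_def add.assoc)
    then have "(\<Sum>v\<in>Bs. gscale (w v) v) = 0" using e0 by simp
    then have "\<forall>v\<in>Bs. w v = 0" using Bs(2) V.dependent_finite[of Bs] s(1) by auto
    then show "z = 0" using s unfolding w_def by (auto simp: vec3_eq)
  qed
  have abE: "\<forall>i j. phiB BK (Mx$i) (My$j) = phiB BK (Mx$j) (My$i)"
  proof (intro allI)
    fix i j
    have "gbracket BK (el (axis i 1)) (el (axis j 1)) = (0, 0, 0)" using brS el_S by blast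
    then show "phiB BK (Mx$i) (My$j) = phiB BK (Mx$j) (My$i)"
      unfolding el_axis gbracket_def by simp
  qed
  have L1X: "Mx = 0" if "det Mx = 0"
    by (rule L1[OF sym ns inj abE that])
  show ?thesis
  proof (cases "det Mx = 0")
    case True
    then have X0: "Mx = 0" by (rule L1X)
    have injY: "\<forall>z. z v* My = 0 \<and> z v* Mx = 0 \<longrightarrow> z = 0" using inj by blast
    have abY: "\<forall>i j. phiB BK (My$i) (Mx$j) = phiB BK (My$j) (Mx$i)"
      using abE phiB_sym[OF sym] by metis
    have dY: "det My \<noteq> 0"
    proof
      assume "det My = 0"
      then have "My = 0" by (rule L1[OF sym ns injY abY])
      then have "axis 1 1 = (0::'a^3)" using inj X0 by simp
      then show False by (simp add: axis_eq_0_iff)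
    qed
    have "S = {(0 *s u, 1 *s u, 0) | u. True}"
    proof
      show "S \<subseteq> {(0 *s u, 1 *s u, 0) | u. True}"
        unfolding Seq el_def X0 by auto
      show "{(0 *s u, 1 *s u, 0) | u. True} \<subseteq> S"
      proof
        fix x :: "'a gelem" assume "x \<in> {(0 *s u, 1 *s u, 0) | u. True}"
        then obtain u :: "'a^3" where x: "x = (0 *s u, 1 *s u, 0)" by blast
        obtain z where "u = z v* My" using vm_surj[OF dY] by blast
        then have "x = el z" unfolding x el_def X0 by simp
        then show "x \<in> S" using el_S by simp
      qed
    qed
    then show ?thesis by (intro exI[of _ 0] exI[of _ 1]) simp
  next
    case False
    define BKa where "BKa = (\<lambda>k i j. to_ac (BK k i j))"
    define Mxa where "Mxa = (\<chi> i. mapv to_ac (Mx$i))"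
    define Mya where "Mya = (\<chi> i. mapv to_ac (My$i))"
    have symA: "\<forall>k i j. BKa k i j = BKa k j i" using sym unfolding BKa_def by simp
    have dXa: "det Mxa = to_ac (det Mx)"
      unfolding Mxa_def by (simp add: det_3)
    then have dXa0: "det Mxa \<noteq> 0" using False by simp
    obtain l where l: "det (\<chi> i. Mya$i - l *s Mxa$i) = 0"
      using exists_root[OF dXa0] by blast
    define Mz where "Mz = (\<chi> i. Mya$i - l *s Mxa$i)"
    have injA: "\<forall>z. z v* Mz = 0 \<and> z v* Mxa = 0 \<longrightarrow> z = 0"
      using vm_inj[OF dXa0] by blast
    have abA: "phiB BKa (Mxa$i) (Mya$j) = phiB BKa (Mxa$j) (Mya$i)" for i j
      unfolding Mxa_def Mya_def BKa_def using abE by (simp add: phiB_ac)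
    have abZ: "\<forall>i j. phiB BKa (Mz$i) (Mxa$j) = phiB BKa (Mz$j) (Mxa$i)"
    proof (intro allI)
      fix i j
      have "phiB BKa (Mya$i) (Mxa$j) = phiB BKa (Mya$j) (Mxa$i)"
        using abA[of i j] phiB_sym[OF symA] by metis
      moreover have "phiB BKa (Mxa$i) (Mxa$j) = phiB BKa (Mxa$j) (Mxa$i)"
        using phiB_sym[OF symA] by metis
      ultimately show "phiB BKa (Mz$i) (Mxa$j) = phiB BKa (Mz$j) (Mxa$i)"
        unfolding Mz_def by (simp add: phiB_diff1)
    qed
    have nsA: "NS BKa" using nsa unfolding BKa_def .
    have "Mz = 0" by (rule L1[OF symA nsA injA abZ l[folded Mz_def]])
    then have rel: "to_ac (My$i$j) = l * to_ac (Mx$i$j)" for i j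
      unfolding Mz_def Mxa_def Mya_def by (simp add: vec_eq_iff)
    have "Mx \<noteq> 0" using False by (auto simp: det_3)
    then obtain i0 j0 where ij0: "Mx$i0$j0 \<noteq> 0" by (metis vec_eq_iff zero_index)
    define mu where "mu = My$i0$j0 / Mx$i0$j0"
    have "l = to_ac mu" using rel[of i0 j0] ij0 unfolding mu_def by (simp add: field_simps)
    then have "to_ac (My$i$j) = to_ac (mu * Mx$i$j)" for i j using rel by simp
    then have Ymu: "My$i$j = mu * Mx$i$j" for i j by (simp only: to_ac_eq_iff)
    have YX: "z v* My = mu *s (z v* Mx)" for z
      using Ymu by (simp add: vec3_eq vm3 algebra_simps)
    have "S = {(1 *s u, mu *s u, 0) | u. True}"
    proof
      show "S \<subseteq> {(1 *s u, mu *s u, 0) | u. True}"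
        unfolding Seq el_def YX by auto
      show "{(1 *s u, mu *s u, 0) | u. True} \<subseteq> S"
      proof
        fix x :: "'a gelem" assume "x \<in> {(1 *s u, mu *s u, 0) | u. True}"
        then obtain u :: "'a^3" where x: "x = (1 *s u, mu *s u, 0)" by blast
        obtain z where "u = z v* Mx" using vm_surj[OF False] by blast
        then have "x = el z" unfolding x el_def YX by simp
        then show "x \<in> S" using el_S by simp
      qed
    qed
    then show ?thesis by (intro exI[of _ 1] exI[of _ mu]) simp
  qed
qed

theorem proposition4p10:
  fixes k :: "complex set" and r :: int and f :: "complex \<Rightarrow> 'K::field"
    and B :: "3 \<Rightarrow> 3 \<Rightarrow> 3 \<Rightarrow> complex"
  assumes "number_field k"
    and "r \<noteq> 0"
    and "ring_hom_on (loc_ring k r) f"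
    and "\<forall>\<kappa> i j. B \<kappa> i j \<in> loc_ring k r"
    and "\<forall>\<kappa> i j. B \<kappa> i j = B \<kappa> j i"
    and "elliptic_over k B"
    and "elliptic_over k (dual_coeffs B)"
    and "geom_smooth (\<lambda>\<kappa> i j. f (B \<kappa> i j))"
    and "geom_smooth (dual_coeffs (\<lambda>\<kappa> i j. f (B \<kappa> i j)))"
  shows "{S. abelian_subalgebra (\<lambda>\<kappa> i j. f (B \<kappa> i j)) S \<and> gdim S = 3 \<and> S \<subseteq> Vsub}
       = {psi (a, b, c, d) ` Usub | a b c d. a * d - b * c \<noteq> 0}"
proof -
  define BK where "BK = (\<lambda>\<kappa> i j. f (B \<kappa> i j))"
  have sym: "\<forall>k i j. BK k i j = BK k j i" using assms(5) unfolding BK_def by metis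
  have nsa: "NS (\<lambda>k i j. to_ac (BK k i j))"
    using NS_from_smooth assms(9) unfolding BK_def by blast
  have ns: "NS BK" using NS_from_ac[OF nsa] .
  show ?thesis
  proof (intro equalityI subsetI)
    fix S :: "'K gelem set" assume "S \<in> {S. abelian_subalgebra (\<lambda>\<kappa> i j. f (B \<kappa> i j)) S \<and> gdim S = 3 \<and> S \<subseteq> Vsub}"
    then have S: "abelian_subalgebra BK S" "gdim S = 3" "S \<subseteq> Vsub" unfolding BK_def by auto
    obtain a c where ac: "a \<noteq> 0 \<or> c \<noteq> 0" "S = {(a *s u, c *s u, 0) | u. True}"
      using hard[OF sym ns nsa S] by blast
    show "S \<in> {psi (a, b, c, d) ` Usub | a b c d. a * d - b * c \<noteq> 0}"
    proof (cases "a = 0")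
      case True
      then have "c \<noteq> 0" using ac by simp
      then have "a * 0 - 1 * c \<noteq> 0" by simp
      moreover have "S = psi (a, 1, c, 0) ` Usub" unfolding psiU_eq ac(2) ..
      ultimately show ?thesis by blast
    next
      case False
      then have "a * 1 - 0 * c \<noteq> 0" by simp
      moreover have "S = psi (a, 0, c, 1) ` Usub" unfolding psiU_eq ac(2) ..
      ultimately show ?thesis by blast
    qed
  next
    fix S :: "'K gelem set" assume "S \<in> {psi (a, b, c, d) ` Usub | a b c d. a * d - b * c \<noteq> 0}"
    then obtain a b c d where S: "S = psi (a, b, c, d) ` Usub" "a * d - b * c \<noteq> 0" by blast
    have ac: "a \<noteq> 0 \<or> c \<noteq> 0" using S(2) by auto
    show "S \<in> {S. abelian_subalgebra (\<lambda>\<kappa> i j. f (B \<kappa> i j)) S \<and> gdim S = 3 \<and> S \<subseteq> Vsub}"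
      using easy[OF sym ac] unfolding S(1) psiU_eq BK_def by simp
  qed
qed

end
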